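(* Let $p,q\geq2$ be relatively prime integers with $p\geq 2q-1$. Then $Z_{p/q}(X_{p,q})\neq\emptyset$, where $X_{p,q}=\bigcup_{a\in D_{p,q}}\left[\frac{a}{pq},\frac{a+1}{pq}\right)$.
   Context: For an integer $n>1$, $A_n=\{0,1,\dots,n-1\}$. For every $d\in A_q$ let $k_d\in A_p$ be the unique element with $k_dq\equiv d\pmod p$, and $D_{p,q}=\{a\in A_{pq}\mid a\equiv k_d\pmod p\text{ for some }d\in A_q\}$. For $x\in\mathbb{R}$, $\{x\}=x-\lfloor x\rfloor$; for $S\subseteq[0,1)$, $Z_{p/q}(S)=\{\xi>0\mid \{\xi(p/q)^i\}\in S\text{ for every }i\in\mathbb{N}\}$ with $\mathbb{N}=\{0,1,2,\dots\}$. *)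

theory Defs
  imports "HOL-Analysis.Analysis"
begin

definition A_set :: "nat \<Rightarrow> nat set" where
  "A_set n = {0..<n}"

definition kd :: "nat \<Rightarrow> nat \<Rightarrow> nat \<Rightarrow> nat" where
  "kd p q d = (THE k. k \<in> A_set p \<and> (k * q) mod p = d mod p)"

definition D_set :: "nat \<Rightarrow> nat \<Rightarrow> nat set" where
  "D_set p q = {a \<in> A_set (p * q). \<exists>d \<in> A_set q. a mod p = kd p q d mod p}"

definition fracpart :: "real \<Rightarrow> real" where
  "fracpart x = x - of_int \<lfloor>x\<rfloor>"

definition Z_set :: "real \<Rightarrow> real set \<Rightarrow> real set" where
  "Z_set r S = {\<xi>. \<xi> > 0 \<and> (\<forall>i::nat. fracpart (\<xi> * r ^ i) \<in> S)}"

definition X_set :: "nat \<Rightarrow> nat \<Rightarrow> real set" where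
  "X_set p q = (\<Union>a \<in> D_set p q. {real a / real (p * q) ..< (real a + 1) / real (p * q)})"

end

theory Submission
  imports Defs
begin

definition ff :: "nat \<Rightarrow> nat \<Rightarrow> nat \<Rightarrow> nat" where
  "ff p q N = p * (N div q) + (p * (N mod q) + q - 1) div q"

lemma ff_bounds:
  fixes p q N :: nat
  assumes q: "q \<ge> 1" and pq: "p \<ge> 2 * q - 1"
  shows "p * N \<le> q * ff p q N" "q * (ff p q N + 1) \<le> p * (N + 1)"
proof -
  define r where "r = N mod q"
  define m where "m = N div q"
  define X where "X = p * r + q - 1"
  define c where "c = X div q"
  have N: "N = q * m + r" unfolding r_def m_def by simp
  have r: "r < q" unfolding r_def using q by simp
  have X: "X = q * c + X mod q" unfolding c_def by simp
  have Xm: "X mod q < q" using q by simp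
  have c1: "q * c \<ge> p * r" using X Xm unfolding X_def by linarith
  have c2: "q * c \<le> p * r + q - 1" using X unfolding X_def by linarith
  have ffe: "ff p q N = p * m + c" unfolding ff_def m_def c_def X_def r_def by simp
  have "p * (q * m + r) \<le> q * (p * m + c)" using c1 by (simp add: algebra_simps)
  then show "p * N \<le> q * ff p q N" unfolding ffe using N by simp
  have "q * (p * m + c + 1) \<le> p * (q * m + r + 1)" using c2 pq q
    by (simp add: algebra_simps)
  then show "q * (ff p q N + 1) \<le> p * (N + 1)" unfolding ffe using N by simp
qed

lemma ff_mod:
  fixes p q N :: nat
  assumes q: "q \<ge> 1" and pq: "p \<ge> 2 * q - 1"
  shows "((ff p q N mod p) * q) mod p < q"
proof -
  define r where "r = N mod q"
  define m where "m = N div q"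
  define X where "X = p * r + q - 1"
  define c where "c = X div q"
  have r: "r < q" unfolding r_def using q by simp
  have X: "X = q * c + X mod q" unfolding c_def by simp
  have Xm: "X mod q < q" using q by simp
  have c1: "q * c \<ge> p * r" using X Xm unfolding X_def by linarith
  have c2: "q * c \<le> p * r + q - 1" using X unfolding X_def by linarith
  have ffe: "ff p q N = p * m + c" unfolding ff_def m_def c_def X_def r_def by simp
  have "q * c < q * p"
  proof -
    have "r \<le> q - 1" using r by linarith
    hence "p * r \<le> p * (q - 1)" by (rule mult_le_mono2)
    hence "q * c \<le> p * (q - 1) + q - 1" using c2 by linarith
    also have "\<dots> < q * p"
    proof -
      have "p * (q - 1) + q - 1 < p * (q - 1) + p" using pq q by linarith
      also have "\<dots> = q * p" using q by (cases q) (simp_all add: algebra_simps)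
      finally show ?thesis .
    qed
    finally show ?thesis .
  qed
  hence cp: "c < p" by simp
  have "ff p q N mod p = c" unfolding ffe using cp by simp
  moreover define e where "e = c * q - p * r"
  moreover have e: "c * q = p * r + e" "e < q" using c1 c2 q unfolding e_def
    by (simp_all add: mult.commute)
  moreover have "e < p" using e pq by linarith
  ultimately show ?thesis by simp
qed

lemma kd_eq:
  fixes p q k :: nat
  assumes "coprime p q" "k < p"
  shows "kd p q ((k * q) mod p) = k"
  unfolding kd_def
proof (rule the_equality)
  show "k \<in> A_set p \<and> k * q mod p = k * q mod p mod p" using assms by (simp add: A_set_def)
next
  fix k' assume h: "k' \<in> A_set p \<and> k' * q mod p = k * q mod p mod p"
  hence "int k' * int q mod int p = int k * int q mod int p"
    by (metis mod_mod_trivial of_nat_mod of_nat_mult)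
  hence "int p dvd (int k' - int k) * int q"
    by (metis mod_eq_dvd_iff left_diff_distrib)
  moreover have "coprime (int p) (int q)" using assms(1) by simp
  ultimately have dv: "int p dvd (int k' - int k)"
    using coprime_dvd_mult_left_iff by blast
  have "\<bar>int k' - int k\<bar> < int p" using h assms(2) by (auto simp: A_set_def)
  hence "int k' - int k = 0" using dv dvd_imp_le_int[of "int k' - int k" "int p"]
    by (cases "int k' - int k = 0") auto
  thus "k' = k" by simp
qed

lemma mem_X:
  fixes p q N :: nat and x :: real
  assumes p: "p \<ge> 2" and q: "q \<ge> 2" and cop: "coprime p q"
    and l: "real N \<le> real (p*q) * x" and u: "real (p*q) * x < real N + 1"
    and K: "((N mod p) * q) mod p < q"
  shows "fracpart x \<in> X_set p q"
proof -
  define P where "P = p * q"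
  have P0: "P > 0" using p q unfolding P_def by simp
  have n1: "P * (N div P) + N mod P = N" by simp
  have n2: "N mod P < P" using P0 by simp
  have fl: "\<lfloor>x\<rfloor> = int (N div P)"
  proof (rule floor_unique)
    have "real (P * (N div P)) \<le> real N" using n1 by linarith
    also have "\<dots> \<le> real P * x" using l unfolding P_def by simp
    finally have "real P * real (N div P) \<le> real P * x" by simp
    thus "of_int (int (N div P)) \<le> x" using P0 by simp
    have "real P * x < real N + 1" using u unfolding P_def by simp
    also have "\<dots> \<le> real (P * (N div P + 1))"
    proof -
      have d: "P * (N div P + 1) = P * (N div P) + P" by simp
      have h: "N + 1 \<le> P * (N div P + 1)" unfolding d using n1 n2 by linarith
      have "real (N + 1) \<le> real (P * (N div P + 1))" using h by (rule of_nat_mono)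
      thus ?thesis by simp
    qed
    finally have "real P * x < real P * (real (N div P) + 1)" by (simp add: algebra_simps)
    thus "x < of_int (int (N div P)) + 1" using P0 by simp
  qed
  define a where "a = N mod P"
  have fx: "fracpart x = x - real (N div P)" unfolding fracpart_def fl by simp
  have Na: "real N = real P * real (N div P) + real a"
    using n1 unfolding a_def by (metis of_nat_add of_nat_mult)
  have lo: "real a \<le> real P * fracpart x" unfolding fx using l Na unfolding P_def
    by (simp add: algebra_simps)
  have hi: "real P * fracpart x < real a + 1" unfolding fx using u Na unfolding P_def
    by (simp add: algebra_simps)
  have int: "fracpart x \<in> {real a / real P ..< (real a + 1) / real P}"
    using lo hi P0 by (simp add: field_simps)
  define k where "k = N mod p"
  have kp: "k < p" using p unfolding k_def by simp
  have amod: "a mod p = k" unfolding a_def k_def P_def by (simp add: mod_mod_cancel)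
  define d where "d = (k * q) mod p"
  have aD: "a \<in> D_set p q"
    unfolding D_set_def
  proof (intro CollectI conjI bexI)
    show "a \<in> A_set (p * q)" using n2 unfolding a_def A_set_def P_def by simp
    show "d \<in> A_set q" using K unfolding d_def k_def A_set_def by simp
    show "a mod p = kd p q d mod p" unfolding d_def kd_eq[OF cop kp] amod using kp by simp
  qed
  show ?thesis unfolding X_set_def using aD int unfolding P_def by blast
qed

theorem corollary2:
  fixes p q :: nat
  assumes "p \<ge> 2" and "q \<ge> 2" and "coprime p q" and "p \<ge> 2 * q - 1"
  shows "Z_set (real p / real q) (X_set p q) \<noteq> {}"
proof -
  have p2: "p \<ge> 2" and q2: "q \<ge> 2" and cop: "coprime p q" and pq: "p \<ge> 2 * q - 1"
    using assms by auto
  have q1: "q \<ge> 1" using q2 by simp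
  define r where "r = real p / real q"
  have r0: "r > 0" using p2 q2 unfolding r_def by simp
  define N where "N i = (ff p q ^^ i) p" for i
  have NS: "N (Suc i) = ff p q (N i)" for i unfolding N_def by simp
  have N0: "N 0 = p" unfolding N_def by simp
  have b1: "real (N i) * r \<le> real (N (Suc i))" for i
  proof -
    have "p * N i \<le> q * N (Suc i)" unfolding NS by (rule ff_bounds(1)[OF q1 pq])
    hence "real p * real (N i) \<le> real q * real (N (Suc i))"
      by (metis of_nat_le_iff of_nat_mult)
    thus ?thesis unfolding r_def using q2 by (simp add: field_simps)
  qed
  have b2: "real (N (Suc i)) + 1 \<le> (real (N i) + 1) * r" for i
  proof -
    have "q * (N (Suc i) + 1) \<le> p * (N i + 1)" unfolding NS by (rule ff_bounds(2)[OF q1 pq])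
    hence "real q * (real (N (Suc i)) + 1) \<le> real p * (real (N i) + 1)"
      by (metis of_nat_le_iff of_nat_mult of_nat_Suc Suc_eq_plus1 add.commute)
    thus ?thesis unfolding r_def using q2 by (simp add: field_simps)
  qed
  define al where "al i = real (N i) / r ^ i" for i
  define be where "be i = (real (N i) + 1) / r ^ i" for i
  have inc: "incseq al"
  proof (rule incseq_SucI)
    fix i
    have "al i = (real (N i) * r) / r ^ Suc i" unfolding al_def using r0 by simp
    also have "\<dots> \<le> real (N (Suc i)) / r ^ Suc i"
      using b1[of i] r0 by (intro divide_right_mono) auto
    finally show "al i \<le> al (Suc i)" unfolding al_def .
  qed
  have dec: "decseq be"
  proof (rule decseq_SucI)
    fix i
    have "be (Suc i) \<le> ((real (N i) + 1) * r) / r ^ Suc i"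
      unfolding be_def using b2[of i] r0 by (intro divide_right_mono) auto
    also have "\<dots> = be i" unfolding be_def using r0 by simp
    finally show "be (Suc i) \<le> be i" .
  qed
  have ab: "al i \<le> be i" for i unfolding al_def be_def using r0 by (simp add: divide_right_mono)
  have abk: "al k \<le> be i" for k i
  proof -
    have "al k \<le> al (max k i)" using inc by (simp add: incseq_def)
    also have "\<dots> \<le> be (max k i)" by (rule ab)
    also have "\<dots> \<le> be i" using dec by (simp add: decseq_def)
    finally show ?thesis .
  qed
  define s where "s = Sup (range al)"
  have bdd: "bdd_above (range al)" using abk by (intro bdd_aboveI) auto
  have sl: "al i \<le> s" for i unfolding s_def using bdd by (intro cSup_upper) auto
  have su: "s \<le> be i" for i unfolding s_def using abk by (intro cSup_least) auto
  have lo: "real (N i) \<le> s * r ^ i" for i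
    using sl[of i] r0 unfolding al_def by (simp add: divide_le_eq)
  have up: "s * r ^ i \<le> real (N i) + 1" for i
    using su[of i] r0 unfolding be_def by (simp add: le_divide_eq)
  have strict: "s * r ^ i < real (N i) + 1" for i
  proof (rule ccontr)
    assume "\<not> ?thesis"
    hence eq: "s * r ^ i = real (N i) + 1" using up[of i] by linarith
    have all: "s * r ^ (i + m) = real (N (i + m)) + 1" for m
    proof (induction m)
      case 0 show ?case using eq by simp
    next
      case (Suc m)
      have "s * r ^ (i + Suc m) = (s * r ^ (i + m)) * r" by simp
      also have "\<dots> = (real (N (i + m)) + 1) * r" using Suc by simp
      moreover have "real (N (i + Suc m)) + 1 \<le> (real (N (i + m)) + 1) * r"
        using b2[of "i + m"] by simp
      ultimately have "s * r ^ (i + Suc m) \<ge> real (N (i + Suc m)) + 1"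
        by linarith
      thus ?case using up[of "i + Suc m"] by linarith
    qed
    define M where "M = N i + 1"
    have "real M * r ^ M = (s * r ^ i) * r ^ M" using eq unfolding M_def by simp
    also have "\<dots> = s * r ^ (i + M)" by (simp add: power_add)
    also have "\<dots> = real (N (i + M)) + 1" by (rule all)
    finally have "real M * r ^ M = real (N (i + M)) + 1" .
    hence "real M * real p ^ M = (real (N (i + M)) + 1) * real q ^ M"
      unfolding r_def using q2 by (simp add: power_divide field_simps)
    hence "M * p ^ M = (N (i + M) + 1) * q ^ M"
      by (metis of_nat_eq_iff of_nat_mult of_nat_power of_nat_Suc Suc_eq_plus1 add.commute)
    hence "q ^ M dvd M * p ^ M" by simp
    moreover have "coprime (q ^ M) (p ^ M)" using cop by (simp add: coprime_commute)
    ultimately have "q ^ M dvd M" using coprime_dvd_mult_left_iff by blast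
    moreover have "M > 0" unfolding M_def by simp
    ultimately have "q ^ M \<le> M" by (simp add: dvd_imp_le)
    moreover have "M < 2 ^ M" by (rule less_exp)
    moreover have "(2::nat) ^ M \<le> q ^ M" using q2 by (simp add: power_mono)
    ultimately show False by linarith
  qed
  have Kc: "((N i mod p) * q) mod p < q" for i
  proof (cases i)
    case 0 thus ?thesis using N0 q2 by simp
  next
    case (Suc j) thus ?thesis using NS ff_mod[OF q1 pq] by simp
  qed
  define \<xi> where "\<xi> = s / real (p * q)"
  have pq0: "real (p * q) > 0" using p2 q2 by simp
  have s0: "s > 0" using lo[of 0] N0 p2 by simp
  have "\<xi> \<in> Z_set (real p / real q) (X_set p q)"
    unfolding Z_set_def
  proof (intro CollectI conjI allI)
    show "\<xi> > 0" unfolding \<xi>_def using s0 pq0 by simp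
    fix i
    have e: "real (p * q) * (\<xi> * (real p / real q) ^ i) = s * r ^ i"
    proof -
      have "real (p * q) * (s / real (p * q)) = s" using p2 q2 by simp
      thus ?thesis unfolding \<xi>_def r_def by (metis mult.assoc)
    qed
    show "fracpart (\<xi> * (real p / real q) ^ i) \<in> X_set p q"
      by (rule mem_X[OF p2 q2 cop, of "N i"]) (use e lo strict Kc in auto)
  qed
  thus ?thesis by blast
qed

end
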